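(* Let $P,Q\subseteq[n]$ be disjoint subsets, let $1\le k\le n$, and let $A\subseteq[n]$ be chosen uniformly at random among all subsets of size $k$. Then: (1) if $|P|\ge|Q|$ then $\mathbb{P}[|A\cap P|\ge|A\cap Q|]\ge\frac12$; (2) for all $s,t$, the events $\{|A\cap P|\ge s\}$ and $\{|A\cap Q|\le t\}$ are positively correlated, i.e. $\mathbb{P}[|A\cap P|\ge s\text{ and }|A\cap Q|\le t]\ge\mathbb{P}[|A\cap P|\ge s]\cdot\mathbb{P}[|A\cap Q|\le t]$. *)

theory Defs
  imports "HOL-Probability.Probability"
begin

definition uniform_ksubset :: "nat \<Rightarrow> nat \<Rightarrow> nat set pmf" where
  "uniform_ksubset n k = pmf_of_set {A. A \<subseteq> {1..n} \<and> card A = k}"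

end

theory Submission
  imports Defs
begin


lemma binom_step:
  fixes r i m :: nat
  assumes "i + 1 \<le> m"
  shows "(r choose i) * (r choose Suc m) \<le> (r choose Suc i) * (r choose m)"
proof -
  have e1: "Suc i * (r choose Suc i) = (r - i) * (r choose i)"
    using binomial_absorption[of i r] binomial_absorb_comp[of r i] by simp
  have e2: "Suc m * (r choose Suc m) = (r - m) * (r choose m)"
    using binomial_absorption[of m r] binomial_absorb_comp[of r m] by simp
  have "Suc i * (r - m) \<le> Suc m * (r - i)"
    using assms by (intro mult_le_mono) auto
  then have ineq: "Suc i * (r - m) \<le> (r - i) * Suc m" by (simp add: mult.commute)
  have "((r choose i) * (r choose Suc m)) * (Suc i * Suc m)
        = (r choose i) * (r choose m) * (Suc i * (r - m))"
    using e2 by (metis mult.assoc mult.commute mult.left_commute)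
  also have "\<dots> \<le> (r choose i) * (r choose m) * ((r - i) * Suc m)"
    by (rule mult_le_mono2[OF ineq])
  also have "\<dots> = ((r choose Suc i) * (r choose m)) * (Suc i * Suc m)"
    using e1 by (metis mult.assoc mult.commute mult.left_commute)
  finally show ?thesis using mult_le_cancel2[of _ "Suc i * Suc m"] by (metis mult_le_cancel2 nat_0_less_mult_iff zero_less_Suc)
qed

definition W :: "nat \<Rightarrow> int \<Rightarrow> nat" where
  "W r z = (if z \<ge> 0 then r choose nat z else 0)"

lemma W_step:
  assumes "i + 2 \<le> j"
  shows "W r i * W r j \<le> W r (i+1) * W r (j-1)"
proof (cases "i \<ge> 0")
  case False thus ?thesis by (simp add: W_def)
next
  case True
  define a where "a = nat i"
  define m where "m = nat (j - 1)"
  have i: "i = int a" and j: "j = int (Suc m)" and am: "a + 1 \<le> m"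
    using True assms by (auto simp: a_def m_def)
  have "nat (int a + 1) = Suc a" "nat (1 + int m) = Suc m" by simp_all
  then show ?thesis using binom_step[OF am, of r] by (simp add: W_def i j)
qed

lemma W_multi:
  fixes d :: nat
  shows "i + 2 * int d \<le> j \<Longrightarrow> W r i * W r j \<le> W r (i + int d) * W r (j - int d)"
proof (induction d)
  case 0 thus ?case by simp
next
  case (Suc d)
  have "W r i * W r j \<le> W r (i + int d) * W r (j - int d)" using Suc by simp
  also have "\<dots> \<le> W r (i + int d + 1) * W r (j - int d - 1)"
    using W_step[of "i + int d" "j - int d" r] Suc.prems by simp
  finally show ?case by (simp add: algebra_simps)
qed

lemma W_lc:
  fixes a b :: int
  assumes "a \<ge> 0" "b \<ge> 0"
  shows "W r u * W r (u + a + b) \<le> W r (u + a) * W r (u + b)"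
proof (cases "a \<le> b")
  case True
  from W_multi[of u "nat a" "u+a+b" r] True assms show ?thesis by simp
next
  case False
  from W_multi[of u "nat b" "u+a+b" r] False assms show ?thesis by (simp add: mult.commute add.commute add.left_commute)
qed



lemma card_split3:
  assumes "A \<subseteq> U" "finite U" "P \<inter> Q = {}"
  shows "card A = card (A \<inter> P) + card (A \<inter> Q) + card (A \<inter> (U - P - Q))"
proof -
  have fA: "finite A" using assms finite_subset by blast
  have "A = ((A \<inter> P) \<union> (A \<inter> Q)) \<union> (A \<inter> (U - P - Q))" using assms by blast
  moreover have "card (((A \<inter> P) \<union> (A \<inter> Q)) \<union> (A \<inter> (U - P - Q))) = card ((A \<inter> P) \<union> (A \<inter> Q)) + card (A \<inter> (U - P - Q))"
    by (rule card_Un_disjoint) (use fA in auto)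
  ultimately have "card A = card ((A \<inter> P) \<union> (A \<inter> Q)) + card (A \<inter> (U - P - Q))" by simp
  also have "card ((A \<inter> P) \<union> (A \<inter> Q)) = card (A \<inter> P) + card (A \<inter> Q)"
    using assms fA by (intro card_Un_disjoint) auto
  finally show ?thesis .
qed

lemma count_xy:
  assumes "P \<subseteq> U" "Q \<subseteq> U" "P \<inter> Q = {}" "finite U"
  shows "card {A. A \<subseteq> U \<and> card A = k \<and> card (A \<inter> P) = x \<and> card (A \<inter> Q) = y}
       = (card P choose x) * (card Q choose y) * W (card (U - P - Q)) (int k - int x - int y)"
proof (cases "x + y \<le> k")
  case False
  have E: "{A. A \<subseteq> U \<and> card A = k \<and> card (A \<inter> P) = x \<and> card (A \<inter> Q) = y} = {}"
    using card_split3[OF _ assms(4,3)] False by fastforce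
  show ?thesis using False unfolding W_def by (subst E) simp
next
  case True
  define R where "R = U - P - Q"
  define T where "T = {A. A \<subseteq> U \<and> card A = k \<and> card (A \<inter> P) = x \<and> card (A \<inter> Q) = y}"
  define Z where "Z = {B. B \<subseteq> P \<and> card B = x} \<times> ({C. C \<subseteq> Q \<and> card C = y} \<times> {D. D \<subseteq> R \<and> card D = k - x - y})"
  have fP: "finite P" and fQ: "finite Q" and fR: "finite R"
    using assms finite_subset unfolding R_def by auto
  have "bij_betw (\<lambda>A. (A \<inter> P, A \<inter> Q, A \<inter> R)) T Z"
  proof (rule bij_betwI[where g = "\<lambda>(B, C, D). B \<union> C \<union> D"])
    show "(\<lambda>A. (A \<inter> P, A \<inter> Q, A \<inter> R)) \<in> T \<rightarrow> Z"
    proof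
      fix A assume "A \<in> T"
      then have A: "A \<subseteq> U" "card A = k" "card (A \<inter> P) = x" "card (A \<inter> Q) = y" by (auto simp: T_def)
      have "card (A \<inter> R) = k - x - y" using card_split3[OF A(1) assms(4,3)] A unfolding R_def by simp
      then show "(A \<inter> P, A \<inter> Q, A \<inter> R) \<in> Z" using A by (auto simp: Z_def)
    qed
    show "(\<lambda>(B, C, D). B \<union> C \<union> D) \<in> Z \<rightarrow> T"
    proof
      fix z assume "z \<in> Z"
      then obtain B C D where z: "z = (B, C, D)" "B \<subseteq> P" "card B = x" "C \<subseteq> Q" "card C = y"
        "D \<subseteq> R" "card D = k - x - y" by (auto simp: Z_def)
      let ?A = "B \<union> C \<union> D"
      have AU: "?A \<subseteq> U" using z assms unfolding R_def by auto
      have "?A \<inter> P = B" "?A \<inter> Q = C" "?A \<inter> (U - P - Q) = D" using z assms unfolding R_def by auto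
      then show "(case z of (B, C, D) \<Rightarrow> B \<union> C \<union> D) \<in> T"
        using card_split3[OF AU assms(4,3)] z True AU by (simp add: T_def)
    qed
    show "\<And>A. A \<in> T \<Longrightarrow> (case (A \<inter> P, A \<inter> Q, A \<inter> R) of (B, C, D) \<Rightarrow> B \<union> C \<union> D) = A"
      unfolding T_def R_def by auto
    show "\<And>z. z \<in> Z \<Longrightarrow> (\<lambda>A. (A \<inter> P, A \<inter> Q, A \<inter> R)) (case z of (B, C, D) \<Rightarrow> B \<union> C \<union> D) = z"
      unfolding Z_def R_def using assms by auto
  qed
  then have "card T = card Z" by (rule bij_betw_same_card)
  also have "card Z = (card P choose x) * ((card Q choose y) * (card R choose (k - x - y)))"
    unfolding Z_def by (simp add: card_cartesian_product n_subsets fP fQ fR)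
  finally show ?thesis using True unfolding T_def R_def W_def
    by (simp add: nat_diff_distrib' of_nat_diff)
qed



lemma part1_count:
  assumes PU: "P \<subseteq> U" and QU: "Q \<subseteq> U" and PQ: "P \<inter> Q = {}" and fU: "finite U"
    and cPQ: "card Q \<le> card P"
  shows "card {A. A \<subseteq> U \<and> card A = k \<and> \<not> card (A \<inter> Q) \<le> card (A \<inter> P)}
       \<le> card {A. A \<subseteq> U \<and> card A = k \<and> card (A \<inter> Q) \<le> card (A \<inter> P)}"
proof -
  have fP: "finite P" using finite_subset[OF PU fU] .
  have fQ: "finite Q" using finite_subset[OF QU fU] .
  obtain P' where P'P: "P' \<subseteq> P" and cP': "card P' = card Q" and fP': "finite P'"
    using obtain_subset_with_card_n[OF cPQ] by blast
  obtain h where h: "bij_betw h Q P'" using finite_same_card_bij[OF fQ fP' cP'[symmetric]] by blast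
  define \<sigma> where "\<sigma> z = (if z \<in> Q then h z else if z \<in> P' then inv_into Q h z else z)" for z
  have hQ: "h ` Q = P'" using h by (simp add: bij_betw_def)
  have invP': "inv_into Q h ` P' = Q" using bij_betw_inv_into[OF h] by (simp add: bij_betw_def)
  have P'Q: "P' \<inter> Q = {}" using P'P PQ by blast
  have inv: "\<sigma> (\<sigma> z) = z" for z
  proof (cases "z \<in> Q")
    case True
    then have "h z \<in> P'" using hQ by blast
    then have "h z \<notin> Q" using P'Q by blast
    then show ?thesis using True \<open>h z \<in> P'\<close> h
      by (simp add: \<sigma>_def bij_betw_def inv_into_f_f)
  next
    case False
    show ?thesis
    proof (cases "z \<in> P'")
      case True
      then have "inv_into Q h z \<in> Q" using invP' by blast
      moreover have "h (inv_into Q h z) = z" using True hQ by (metis f_inv_into_f)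
      ultimately show ?thesis using False True by (simp add: \<sigma>_def)
    next
      case False2: False
      then show ?thesis using False by (simp add: \<sigma>_def)
    qed
  qed
  have injs: "inj \<sigma>" by (metis inv injI)
  have sQ: "\<sigma> ` Q = P'" using hQ by (auto simp: \<sigma>_def)
  have sP': "\<sigma> ` P' = Q"
  proof -
    have "\<sigma> ` P' = inv_into Q h ` P'" using P'Q by (auto simp: \<sigma>_def intro!: image_cong)
    then show ?thesis using invP' by simp
  qed
  have P'U: "P' \<subseteq> U" using P'P PU by blast
  have sU: "\<sigma> ` U \<subseteq> U" using sQ sP' QU P'U by (auto simp: \<sigma>_def) (blast+)?
  show ?thesis
  proof (rule card_inj_on_le[where f = "image \<sigma>"])
    show "inj_on (image \<sigma>) {A. A \<subseteq> U \<and> card A = k \<and> \<not> card (A \<inter> Q) \<le> card (A \<inter> P)}"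
      using injs by (simp add: inj_on_def inj_image_eq_iff)
    show "finite {A. A \<subseteq> U \<and> card A = k \<and> card (A \<inter> Q) \<le> card (A \<inter> P)}"
      using fU by (rule rev_finite_subset[OF finite_Pow_iff[THEN iffD2]]) auto
    show "image \<sigma> ` {A. A \<subseteq> U \<and> card A = k \<and> \<not> card (A \<inter> Q) \<le> card (A \<inter> P)}
          \<subseteq> {A. A \<subseteq> U \<and> card A = k \<and> card (A \<inter> Q) \<le> card (A \<inter> P)}"
    proof clarify
      fix A assume AU: "A \<subseteq> U" and bad: "\<not> card (A \<inter> Q) \<le> card (A \<inter> P)" and ck: "k = card A"
      have fA: "finite A" using AU fU finite_subset by blast
      have "\<sigma> ` A \<subseteq> U" using AU sU by blast
      moreover have "card (\<sigma> ` A) = card A" using injs by (simp add: card_image inj_on_subset)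
      moreover have e1: "\<sigma> ` A \<inter> Q = \<sigma> ` (A \<inter> P')" using sP' injs by (simp add: image_Int)
      moreover have e2: "\<sigma> ` A \<inter> P' = \<sigma> ` (A \<inter> Q)" using sQ injs by (simp add: image_Int)
      moreover have c1: "card (\<sigma> ` (A \<inter> P')) = card (A \<inter> P')" "card (\<sigma> ` (A \<inter> Q)) = card (A \<inter> Q)"
        using injs by (simp_all add: card_image inj_on_subset)
      moreover have "card (\<sigma> ` A \<inter> Q) = card (A \<inter> P')" using e1 c1 by simp
      moreover have "card (\<sigma> ` A \<inter> P') = card (A \<inter> Q)" using e2 c1 by simp
      moreover have "card (A \<inter> P') \<le> card (A \<inter> P)" using P'P fA by (intro card_mono) auto
      moreover have "card (\<sigma> ` A \<inter> P') \<le> card (\<sigma> ` A \<inter> P)" using P'P fA by (intro card_mono) auto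
      ultimately show "\<sigma> ` A \<subseteq> U \<and> card (\<sigma> ` A) = card A \<and> card (\<sigma> ` A \<inter> Q) \<le> card (\<sigma> ` A \<inter> P)"
        using bad by linarith
    qed
  qed
qed



definition cnt :: "nat set \<Rightarrow> nat set \<Rightarrow> nat set \<Rightarrow> nat \<Rightarrow> (nat \<Rightarrow> nat \<Rightarrow> bool) \<Rightarrow> nat" where
  "cnt U P Q k \<phi> = card {A. A \<subseteq> U \<and> card A = k \<and> \<phi> (card (A \<inter> P)) (card (A \<inter> Q))}"

lemma cnt_split:
  assumes "finite U"
  shows "cnt U P Q k \<phi> = cnt U P Q k (\<lambda>x y. \<phi> x y \<and> \<psi> x y) + cnt U P Q k (\<lambda>x y. \<phi> x y \<and> \<not> \<psi> x y)"
proof -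
  let ?S = "\<lambda>\<phi>. {A. A \<subseteq> U \<and> card A = k \<and> \<phi> (card (A \<inter> P)) (card (A \<inter> Q))}"
  have fin: "finite (?S \<gamma>)" for \<gamma>
    using assms by (rule rev_finite_subset[OF finite_Pow_iff[THEN iffD2]]) auto
  have "?S \<phi> = ?S (\<lambda>x y. \<phi> x y \<and> \<psi> x y) \<union> ?S (\<lambda>x y. \<phi> x y \<and> \<not> \<psi> x y)" by auto
  moreover have "card (?S (\<lambda>x y. \<phi> x y \<and> \<psi> x y) \<union> ?S (\<lambda>x y. \<phi> x y \<and> \<not> \<psi> x y))
     = card (?S (\<lambda>x y. \<phi> x y \<and> \<psi> x y)) + card (?S (\<lambda>x y. \<phi> x y \<and> \<not> \<psi> x y))"
    by (rule card_Un_disjoint[OF fin fin]) auto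
  ultimately show ?thesis unfolding cnt_def by simp
qed

lemma cnt_sum:
  assumes PU: "P \<subseteq> U" and QU: "Q \<subseteq> U" and fU: "finite U"
  shows "cnt U P Q k \<phi> = (\<Sum>xy \<in> {xy \<in> {0..card U} \<times> {0..card U}. \<phi> (fst xy) (snd xy)}.
            card {A. A \<subseteq> U \<and> card A = k \<and> card (A \<inter> P) = fst xy \<and> card (A \<inter> Q) = snd xy})"
proof -
  define T0 where "T0 = {A. A \<subseteq> U \<and> card A = k \<and> \<phi> (card (A \<inter> P)) (card (A \<inter> Q))}"
  define T where "T = {xy \<in> {0..card U} \<times> {0..card U}. \<phi> (fst xy) (snd xy)}"
  define f where "f A = (card (A \<inter> P), card (A \<inter> Q))" for A
  have fT0: "finite T0" unfolding T0_def
    using fU by (rule rev_finite_subset[OF finite_Pow_iff[THEN iffD2]]) auto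
  have fT: "finite T" unfolding T_def by auto
  have fST: "f ` T0 \<subseteq> T"
  proof
    fix z assume "z \<in> f ` T0"
    then obtain A where A: "A \<in> T0" "z = f A" by blast
    have "card (A \<inter> P) \<le> card U" "card (A \<inter> Q) \<le> card U"
      using A fU unfolding T0_def by (auto intro: card_mono)
    then show "z \<in> T" using A unfolding T_def T0_def f_def by auto
  qed
  have "(\<Sum>y\<in>T. \<Sum>x\<in>{x. x \<in> T0 \<and> f x = y}. (1::nat)) = (\<Sum>x\<in>T0. 1)"
    by (rule sum.group[OF fT0 fT fST])
  then have "card T0 = (\<Sum>y\<in>T. card {x. x \<in> T0 \<and> f x = y})" by simp
  also have "\<dots> = (\<Sum>xy\<in>T. card {A. A \<subseteq> U \<and> card A = k \<and> card (A \<inter> P) = fst xy \<and> card (A \<inter> Q) = snd xy})"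
  proof (rule sum.cong)
    fix xy assume "xy \<in> T"
    then show "card {x. x \<in> T0 \<and> f x = xy} = card {A. A \<subseteq> U \<and> card A = k \<and> card (A \<inter> P) = fst xy \<and> card (A \<inter> Q) = snd xy}"
      unfolding T_def T0_def f_def by (intro arg_cong[where f = card]) auto
  qed simp
  finally show ?thesis unfolding cnt_def T0_def T_def .
qed

lemma key_ineq:
  fixes k :: nat
  assumes PU: "P \<subseteq> U" and QU: "Q \<subseteq> U" and PQ: "P \<inter> Q = {}" and fU: "finite U"
    and xx: "x' < x" and yy: "y' < y"
  defines "G \<equiv> \<lambda>x y. card {A. A \<subseteq> U \<and> card A = k \<and> card (A \<inter> P) = x \<and> card (A \<inter> Q) = y}"
  shows "G x y * G x' y' \<le> G x y' * G x' y"
proof -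
  define r where "r = card (U - P - Q)"
  have G: "G a b = (card P choose a) * (card Q choose b) * W r (int k - int a - int b)" for a b
    unfolding G_def r_def by (rule count_xy[OF PU QU PQ fU])
  have e1: "int k - int x - int y + (int x - int x') + (int y - int y') = int k - int x' - int y'" by simp
  have e2: "int k - int x - int y + (int x - int x') = int k - int x' - int y" by simp
  have e3: "int k - int x - int y + (int y - int y') = int k - int x - int y'" by simp
  have w: "W r (int k - int x - int y) * W r (int k - int x' - int y')
        \<le> W r (int k - int x' - int y) * W r (int k - int x - int y')"
  proof -
    have nn1: "0 \<le> int x - int x'" and nn2: "0 \<le> int y - int y'" using xx yy by simp_all
    have e4: "int k - int x' - int y + (int y - int y') = int k - int x' - int y'" by simp
    show ?thesis
      using W_lc[where a="int x - int x'" and b="int y - int y'" and r=r and u="int k - int x - int y", OF nn1 nn2]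
      by (simp only: e2 e3 e4)
  qed
  define K where "K = (card P choose x) * (card Q choose y) * (card P choose x') * (card Q choose y')"
  have "G x y * G x' y' = K * (W r (int k - int x - int y) * W r (int k - int x' - int y'))"
    unfolding G K_def by (simp add: mult_ac)
  also have "\<dots> \<le> K * (W r (int k - int x' - int y) * W r (int k - int x - int y'))"
    by (rule mult_le_mono2[OF w])
  also have "\<dots> = G x y' * G x' y"
    unfolding G K_def by (simp add: mult_ac)
  finally show ?thesis .
qed

lemma part2_count:
  assumes PU: "P \<subseteq> U" and QU: "Q \<subseteq> U" and PQ: "P \<inter> Q = {}" and fU: "finite U"
  shows "cnt U P Q k (\<lambda>x y. s \<le> x \<and> \<not> y \<le> t) * cnt U P Q k (\<lambda>x y. \<not> s \<le> x \<and> y \<le> t)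
       \<le> cnt U P Q k (\<lambda>x y. s \<le> x \<and> y \<le> t) * cnt U P Q k (\<lambda>x y. \<not> s \<le> x \<and> \<not> y \<le> t)"
proof -
  define G where "G = (\<lambda>xy. card {A. A \<subseteq> U \<and> card A = k \<and> card (A \<inter> P) = fst xy \<and> card (A \<inter> Q) = snd xy})"
  define I where "I = (\<lambda>\<phi>. {xy \<in> {0..card U} \<times> {0..card U}. \<phi> (fst xy) (snd xy)})"
  have cs: "cnt U P Q k \<phi> = sum G (I \<phi>)" for \<phi>
    unfolding G_def I_def by (rule cnt_sum[OF PU QU fU])
  have prod: "sum G (I \<phi>) * sum G (I \<psi>) = (\<Sum>z \<in> I \<phi> \<times> I \<psi>. G (fst z) * G (snd z))" for \<phi> \<psi>
    by (simp add: sum_product sum.cartesian_product case_prod_beta)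
  define sw where "sw = (\<lambda>z :: (nat \<times> nat) \<times> (nat \<times> nat). ((fst (fst z), snd (snd z)), (fst (snd z), snd (fst z))))"
  let ?Ia = "I (\<lambda>x y. s \<le> x \<and> y \<le> t)" and ?Ib = "I (\<lambda>x y. s \<le> x \<and> \<not> y \<le> t)"
  let ?Ic = "I (\<lambda>x y. \<not> s \<le> x \<and> y \<le> t)" and ?Id = "I (\<lambda>x y. \<not> s \<le> x \<and> \<not> y \<le> t)"
  have "(\<Sum>z \<in> ?Ib \<times> ?Ic. G (fst z) * G (snd z)) \<le> (\<Sum>z \<in> ?Ib \<times> ?Ic. G (fst (sw z)) * G (snd (sw z)))"
  proof (rule sum_mono)
    fix z assume "z \<in> ?Ib \<times> ?Ic"
    then obtain x y x' y' where z: "z = ((x, y), (x', y'))" "x' < x" "y' < y"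
      unfolding I_def by (cases z) auto
    show "G (fst z) * G (snd z) \<le> G (fst (sw z)) * G (snd (sw z))"
      using key_ineq[OF PU QU PQ fU z(2,3), of k] unfolding z sw_def G_def by simp
  qed
  also have "\<dots> = (\<Sum>z \<in> ?Ia \<times> ?Id. G (fst z) * G (snd z))"
    by (rule sum.reindex_bij_witness[where i = sw and j = sw]) (auto simp: sw_def I_def)
  finally show ?thesis unfolding cs prod .
qed



theorem lemma2p8:
  fixes n k :: nat and P Q :: "nat set"
  assumes "P \<subseteq> {1..n}" and "Q \<subseteq> {1..n}" and "P \<inter> Q = {}"
    and "1 \<le> k" and "k \<le> n"
  shows "(card P \<ge> card Q \<longrightarrow>
           measure_pmf.prob (uniform_ksubset n k) {A. card (A \<inter> P) \<ge> card (A \<inter> Q)} \<ge> 1/2)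
       \<and> (\<forall>s t :: nat.
           measure_pmf.prob (uniform_ksubset n k) {A. card (A \<inter> P) \<ge> s \<and> card (A \<inter> Q) \<le> t}
           \<ge> measure_pmf.prob (uniform_ksubset n k) {A. card (A \<inter> P) \<ge> s}
             * measure_pmf.prob (uniform_ksubset n k) {A. card (A \<inter> Q) \<le> t})"
proof -
  define U where "U = {1..n}"
  define S where "S = {A. A \<subseteq> U \<and> card A = k}"
  have fU: "finite U" unfolding U_def by simp
  have PU: "P \<subseteq> U" and QU: "Q \<subseteq> U" using assms unfolding U_def by auto
  have fS: "finite S" unfolding S_def
    using fU by (rule rev_finite_subset[OF finite_Pow_iff[THEN iffD2]]) auto
  have "{1..k} \<in> S" using assms unfolding S_def U_def by auto
  then have neS: "S \<noteq> {}" by blast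
  have pr: "measure_pmf.prob (uniform_ksubset n k) E = real (card (S \<inter> E)) / real (card S)" for E
    unfolding uniform_ksubset_def using measure_pmf_of_set[OF neS fS, of E] by (simp add: S_def U_def)
  have cS: "card S = cnt U P Q k (\<lambda>x y. True)" unfolding S_def cnt_def by simp
  have Npos: "card S > 0" using fS neS by (simp add: card_gt_0_iff)
  have part1: "card P \<ge> card Q \<longrightarrow>
           measure_pmf.prob (uniform_ksubset n k) {A. card (A \<inter> P) \<ge> card (A \<inter> Q)} \<ge> 1/2"
  proof
    assume cPQ: "card P \<ge> card Q"
    define g where "g = cnt U P Q k (\<lambda>x y. True \<and> y \<le> x)"
    define b where "b = cnt U P Q k (\<lambda>x y. True \<and> \<not> y \<le> x)"
    have N: "card S = g + b" unfolding cS g_def b_def by (rule cnt_split[OF fU])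
    have bg: "b \<le> g" using part1_count[OF PU QU assms(3) fU cPQ, of k] unfolding b_def g_def cnt_def by simp
    have "S \<inter> {A. card (A \<inter> P) \<ge> card (A \<inter> Q)} = {A. A \<subseteq> U \<and> card A = k \<and> True \<and> card (A \<inter> Q) \<le> card (A \<inter> P)}"
      unfolding S_def by auto
    then have "measure_pmf.prob (uniform_ksubset n k) {A. card (A \<inter> P) \<ge> card (A \<inter> Q)} = g / (g + b)"
      unfolding pr g_def cnt_def N by (simp add: g_def cnt_def)
    also have "\<dots> \<ge> 1/2"
    proof -
      have "0 < g + b" using Npos N by simp
      then have pos: "(0::real) < real g + real b" by linarith
      have "real b \<le> real g" using bg by simp
      then show ?thesis using pos by (simp add: field_simps)
    qed
    finally show "measure_pmf.prob (uniform_ksubset n k) {A. card (A \<inter> P) \<ge> card (A \<inter> Q)} \<ge> 1/2" .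
  qed
  have part2: "measure_pmf.prob (uniform_ksubset n k) {A. card (A \<inter> P) \<ge> s \<and> card (A \<inter> Q) \<le> t}
           \<ge> measure_pmf.prob (uniform_ksubset n k) {A. card (A \<inter> P) \<ge> s}
             * measure_pmf.prob (uniform_ksubset n k) {A. card (A \<inter> Q) \<le> t}" for s t :: nat
  proof -
    define a where "a = cnt U P Q k (\<lambda>x y. s \<le> x \<and> y \<le> t)"
    define b where "b = cnt U P Q k (\<lambda>x y. s \<le> x \<and> \<not> y \<le> t)"
    define c where "c = cnt U P Q k (\<lambda>x y. \<not> s \<le> x \<and> y \<le> t)"
    define d where "d = cnt U P Q k (\<lambda>x y. \<not> s \<le> x \<and> \<not> y \<le> t)"
    have bc: "b * c \<le> a * d" unfolding a_def b_def c_def d_def by (rule part2_count[OF PU QU assms(3) fU])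
    have s1: "cnt U P Q k (\<lambda>x y. True) = cnt U P Q k (\<lambda>x y. True \<and> s \<le> x) + cnt U P Q k (\<lambda>x y. True \<and> \<not> s \<le> x)"
      by (rule cnt_split[OF fU])
    have s2: "cnt U P Q k (\<lambda>x y. True \<and> s \<le> x) = a + b" unfolding a_def b_def
      using cnt_split[OF fU, of P Q k "\<lambda>x y. True \<and> s \<le> x" "\<lambda>x y. y \<le> t"] by simp
    have s3: "cnt U P Q k (\<lambda>x y. True \<and> \<not> s \<le> x) = c + d" unfolding c_def d_def
      using cnt_split[OF fU, of P Q k "\<lambda>x y. True \<and> \<not> s \<le> x" "\<lambda>x y. y \<le> t"] by simp
    have s4: "cnt U P Q k (\<lambda>x y. y \<le> t) = a + c" unfolding a_def c_def
      using cnt_split[OF fU, of P Q k "\<lambda>x y. y \<le> t" "\<lambda>x y. s \<le> x"] by (simp add: conj_commute)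
    have N: "card S = a + b + c + d" using cS s1 s2 s3 by simp
    have pa: "measure_pmf.prob (uniform_ksubset n k) {A. card (A \<inter> P) \<ge> s \<and> card (A \<inter> Q) \<le> t} = a / card S"
    proof -
      have "S \<inter> {A. card (A \<inter> P) \<ge> s \<and> card (A \<inter> Q) \<le> t} = {A. A \<subseteq> U \<and> card A = k \<and> s \<le> card (A \<inter> P) \<and> card (A \<inter> Q) \<le> t}"
        unfolding S_def by auto
      then show ?thesis unfolding pr a_def cnt_def by simp
    qed
    have pab: "measure_pmf.prob (uniform_ksubset n k) {A. card (A \<inter> P) \<ge> s} = (a + b) / card S"
    proof -
      have "S \<inter> {A. card (A \<inter> P) \<ge> s} = {A. A \<subseteq> U \<and> card A = k \<and> True \<and> s \<le> card (A \<inter> P)}"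
        unfolding S_def by auto
      then show ?thesis unfolding pr s2[symmetric] cnt_def by simp
    qed
    have pac: "measure_pmf.prob (uniform_ksubset n k) {A. card (A \<inter> Q) \<le> t} = (a + c) / card S"
    proof -
      have "S \<inter> {A. card (A \<inter> Q) \<le> t} = {A. A \<subseteq> U \<and> card A = k \<and> card (A \<inter> Q) \<le> t}"
        unfolding S_def by auto
      then show ?thesis unfolding pr s4[symmetric] cnt_def by simp
    qed
    have key: "(a + b) * (a + c) \<le> a * card S" using bc unfolding N by (simp add: algebra_simps)
    then have key': "real (a + b) * real (a + c) \<le> real a * real (card S)"
      by (metis of_nat_le_iff of_nat_mult)
    have "real (a + b) / card S * (real (a + c) / card S) = (real (a + b) * real (a + c)) / (card S * card S)"
      by simp
    also have "\<dots> \<le> (real a * card S) / (card S * card S)"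
      using key' Npos by (intro divide_right_mono) auto
    also have "\<dots> = real a / card S" using Npos by simp
    finally show ?thesis unfolding pa pab pac by simp
  qed
  show ?thesis using part1 part2 by blast
qed

end
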